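(* The class of data languages accepted by deterministic SAFA (DSAFA) is closed under complementation (with respect to $(\Sigma\times D)^*$), but is not closed under union, intersection, concatenation, Kleene closure, reversal, homomorphism, or inverse homomorphism.
   Context: $D$ is a fixed countably infinite set of data values; for a finite alphabet $\Sigma$, data words are elements of $(\Sigma\times D)^*$. A set augmented finite automaton (SAFA) is a tuple $M=(Q,\Sigma\times D,q_0,F,H,\delta)$: $Q$ finite set of states, $q_0\in Q$ initial, $F\subseteq Q$ final, $H=\{h_1,\dots,h_m\}$ a finite collection of (names of) sets of data values, $\delta\subseteq Q\times\Sigma\times C\times OP\times Q$ with $C=\{p(h_i),\,!p(h_i): h_i\in H\}$, $OP=\{-\}\cup\{\mathsf{ins}(h_i):h_i\in H\}$. Configurations are $(q,\langle S_1,\dots,S_m\rangle)$ with $S_i\subseteq D$ finite; initially state $q_0$ and all sets empty. On reading $(a,d)$, a transition $(q,a,\alpha,op,q')$ from the current state may be taken if $\alpha=p(h_i)$ and $d\in S_i$, or $\alpha=\,!p(h_i)$ and $d\notin S_i$; then the state becomes $q'$ and if $op=\mathsf{ins}(h_j)$ the value $d$ is added to $S_j$ ($op=-$ changes nothing). A word is accepted if some run reads it entirely and ends in $F$. A SAFA is deterministic (a DSAFA) if for every $q\in Q$ and $a\in\Sigma$, all transitions from $q$ on letter $a$ test the same set $h_i$, and there is at most one such transition with condition $p(h_i)$ and at most one with condition $!p(h_i)$. Concatenation is $L_1L_2=\{uv:u\in L_1,v\in L_2\}$, Kleene closure is $L^*=\{u_1\cdots u_n:n\ge 0,u_i\in L\}$,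 reversal reverses the order of letters, and a homomorphism is a monoid homomorphism $(\Sigma\times D)^*\to(\Sigma\times D)^*$ determined by images of single letters; "not closed" means there exist DSAFA-recognizable languages (and, where relevant, a homomorphism) whose result is not recognized by any DSAFA. *)

theory Defs
  imports Main "HOL-Library.Countable"
begin

text \<open>States are natural numbers; the sets h_1..h_m are indexed by 0..m-1.\<close>

datatype cond = P nat | NP nat
datatype setop = NoOp | Ins nat

record safa =
  states :: "nat set"
  init   :: nat
  finals :: "nat set"
  nsets  :: nat
  trans  :: "(nat \<times> nat \<times> cond \<times> setop \<times> nat) set"

fun cond_idx :: "cond \<Rightarrow> nat" where
  "cond_idx (P i) = i" | "cond_idx (NP i) = i"

fun op_ok :: "nat \<Rightarrow> setop \<Rightarrow> bool" where
  "op_ok m NoOp = True" | "op_ok m (Ins j) = (j < m)"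

definition safa_wf :: "nat set \<Rightarrow> safa \<Rightarrow> bool" where
  "safa_wf \<Sigma> M \<longleftrightarrow> finite (states M) \<and> init M \<in> states M \<and> finals M \<subseteq> states M
     \<and> (\<forall>(q, a, c, op, q') \<in> trans M. q \<in> states M \<and> a \<in> \<Sigma> \<and> cond_idx c < nsets M
            \<and> op_ok (nsets M) op \<and> q' \<in> states M)"

definition safa_det :: "safa \<Rightarrow> bool" where
  "safa_det M \<longleftrightarrow> (\<forall>q a c1 o1 q1 c2 o2 q2.
      (q, a, c1, o1, q1) \<in> trans M \<and> (q, a, c2, o2, q2) \<in> trans M \<longrightarrow>
        cond_idx c1 = cond_idx c2 \<and> (c1 = c2 \<longrightarrow> o1 = o2 \<and> q1 = q2))"

type_synonym 'd config = "nat \<times> (nat \<Rightarrow> 'd set)"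

fun cond_sat :: "cond \<Rightarrow> (nat \<Rightarrow> 'd set) \<Rightarrow> 'd \<Rightarrow> bool" where
  "cond_sat (P i) S d = (d \<in> S i)"
| "cond_sat (NP i) S d = (d \<notin> S i)"

fun apply_op :: "setop \<Rightarrow> (nat \<Rightarrow> 'd set) \<Rightarrow> 'd \<Rightarrow> (nat \<Rightarrow> 'd set)" where
  "apply_op NoOp S d = S"
| "apply_op (Ins j) S d = S(j := insert d (S j))"

definition step :: "safa \<Rightarrow> 'd config \<Rightarrow> nat \<times> 'd \<Rightarrow> 'd config \<Rightarrow> bool" where
  "step M c x c' \<longleftrightarrow> (\<exists>cd op. (fst c, fst x, cd, op, fst c') \<in> trans M
       \<and> cond_sat cd (snd c) (snd x) \<and> snd c' = apply_op op (snd c) (snd x))"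

fun runs :: "safa \<Rightarrow> 'd config \<Rightarrow> (nat \<times> 'd) list \<Rightarrow> 'd config set" where
  "runs M c [] = {c}"
| "runs M c (x # w) = \<Union> {runs M c' w | c'. step M c x c'}"

definition words :: "nat set \<Rightarrow> (nat \<times> 'd) list set" where
  "words \<Sigma> = {w. set w \<subseteq> \<Sigma> \<times> UNIV}"

definition lang :: "nat set \<Rightarrow> safa \<Rightarrow> (nat \<times> 'd) list set" where
  "lang \<Sigma> M = {w \<in> words \<Sigma>. \<exists>c \<in> runs M (init M, \<lambda>_. {}) w. fst c \<in> finals M}"

definition dsafa_lang :: "nat set \<Rightarrow> (nat \<times> 'd) list set \<Rightarrow> bool" where
  "dsafa_lang \<Sigma> L \<longleftrightarrow> (\<exists>M. safa_wf \<Sigma> M \<and> safa_det M \<and> lang \<Sigma> M = L)"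

definition conc :: "'x list set \<Rightarrow> 'x list set \<Rightarrow> 'x list set" where
  "conc L1 L2 = {u @ v | u v. u \<in> L1 \<and> v \<in> L2}"

definition kstar :: "'x list set \<Rightarrow> 'x list set" where
  "kstar L = {concat us | us. set us \<subseteq> L}"

definition hom_ext :: "('x \<Rightarrow> 'x list) \<Rightarrow> 'x list \<Rightarrow> 'x list" where
  "hom_ext h w = concat (map h w)"

definition is_hom :: "nat set \<Rightarrow> (nat \<times> 'd \<Rightarrow> (nat \<times> 'd) list) \<Rightarrow> bool" where
  "is_hom \<Sigma> h \<longleftrightarrow> (\<forall>a \<in> \<Sigma>. \<forall>d. h (a, d) \<in> words \<Sigma>)"

end

theory Submission
  imports Defs
begin


definition acc :: "safa \<Rightarrow> 'd config \<Rightarrow> (nat \<times> 'd) list \<Rightarrow> bool" where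
  "acc M c w \<longleftrightarrow> (\<exists>c'\<in>runs M c w. fst c' \<in> finals M)"

lemma runs_Cons_mem: "c'' \<in> runs M c (x # w) \<longleftrightarrow> (\<exists>c'. step M c x c' \<and> c'' \<in> runs M c' w)"
  by auto

declare runs.simps(2)[simp del]
declare runs_Cons_mem[simp]

lemma runs_snoc_mem: "c'' \<in> runs M c (w @ [x]) \<longleftrightarrow> (\<exists>c'\<in>runs M c w. step M c' x c'')"
proof (induction w arbitrary: c)
  case Nil then show ?case unfolding append.simps(1) runs_Cons_mem runs.simps(1) by blast
next
  case (Cons y w)
  show ?case unfolding append.simps(2) runs_Cons_mem Cons.IH Bex_def runs_Cons_mem by blast
qed

lemma step_simp: "step M (q,S) (a,d) c' \<longleftrightarrow>
   (\<exists>cd op q'. (q,a,cd,op,q') \<in> trans M \<and> cond_sat cd S d \<and> c' = (q', apply_op op S d))"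
  unfolding step_def by (cases c') auto

lemma acc_Nil[simp]: "acc M c [] \<longleftrightarrow> fst c \<in> finals M"
  by (simp add: acc_def)

lemma acc_Cons[simp]: "acc M (q,S) ((a,d) # w) \<longleftrightarrow>
   (\<exists>cd op q'. (q,a,cd,op,q') \<in> trans M \<and> cond_sat cd S d \<and> acc M (q', apply_op op S d) w)"
proof -
  have "acc M (q,S) ((a,d)#w) \<longleftrightarrow> (\<exists>c'. step M (q,S) (a,d) c' \<and> acc M c' w)"
    unfolding acc_def Bex_def runs_Cons_mem by blast
  then show ?thesis by (auto simp: step_simp)
qed

lemma acc_snoc: "acc M c (w@[x]) \<longleftrightarrow> (\<exists>c2\<in>runs M c w. \<exists>c'. step M c2 x c' \<and> fst c' \<in> finals M)"
  unfolding acc_def Bex_def runs_snoc_mem by blast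

lemma lang_acc: "lang \<Sigma> M = {w \<in> words \<Sigma>. acc M (init M, \<lambda>_. {}) w}"
  by (simp add: lang_def acc_def)

lemma cond_sat_eq: "cond_idx c1 = cond_idx c2 \<Longrightarrow> cond_sat c1 S d \<Longrightarrow> cond_sat c2 S d \<Longrightarrow> c1 = c2"
  by (cases c1; cases c2) auto

lemma safa_detD: "safa_det M \<Longrightarrow> (q,a,c1,o1,q1) \<in> trans M \<Longrightarrow> (q,a,c2,o2,q2) \<in> trans M
  \<Longrightarrow> cond_idx c1 = cond_idx c2 \<and> (c1 = c2 \<longrightarrow> o1 = o2 \<and> q1 = q2)"
  unfolding safa_det_def
  apply (drule spec[where x=q], drule spec[where x=a], drule spec[where x=c1], drule spec[where x=o1],
    drule spec[where x=q1], drule spec[where x=c2], drule spec[where x=o2], drule spec[where x=q2])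
  by blast

lemma step_det: assumes "safa_det M" "step M c x c1" "step M c x c2" shows "c1 = c2"
proof -
  obtain cd1 op1 where 1: "(fst c, fst x, cd1, op1, fst c1) \<in> trans M" "cond_sat cd1 (snd c) (snd x)"
     "snd c1 = apply_op op1 (snd c) (snd x)" using assms(2) unfolding step_def by blast
  obtain cd2 op2 where 2: "(fst c, fst x, cd2, op2, fst c2) \<in> trans M" "cond_sat cd2 (snd c) (snd x)"
     "snd c2 = apply_op op2 (snd c) (snd x)" using assms(3) unfolding step_def by blast
  have D: "cond_idx cd1 = cond_idx cd2 \<and> (cd1 = cd2 \<longrightarrow> op1 = op2 \<and> fst c1 = fst c2)"
    by (rule safa_detD[OF assms(1) 1(1) 2(1)])
  then have "cd1 = cd2" using cond_sat_eq[OF conjunct1[OF D] 1(2) 2(2)] by simp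
  then have "op1 = op2 \<and> fst c1 = fst c2" using D by blast
  then show ?thesis using 1(3) 2(3) by (simp add: prod_eq_iff)
qed

lemma runs_det: "safa_det M \<Longrightarrow> c1 \<in> runs M c w \<Longrightarrow> c2 \<in> runs M c w \<Longrightarrow> c1 = c2"
proof (induction w arbitrary: c)
  case Nil then show ?case by simp
next
  case (Cons x w)
  then obtain d1 d2 where "step M c x d1" "c1 \<in> runs M d1 w" "step M c x d2" "c2 \<in> runs M d2 w"
    by (auto simp: runs_Cons_mem)
  then show ?case using Cons step_det by metis
qed

lemma apply_op_mono: "S i \<subseteq> apply_op op S d i"
  by (cases op) auto

lemma step_mono: "step M c x c' \<Longrightarrow> snd c i \<subseteq> snd c' i"
  unfolding step_def using apply_op_mono by fastforce

lemma step_E: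
  assumes "step M c (a,d) c'"
  obtains cd opr where "(fst c, a, cd, opr, fst c') \<in> trans M" "cond_sat cd (snd c) d"
    "snd c' = apply_op opr (snd c) d"
  using assms unfolding step_def by auto

lemma apply_op_other: "e \<noteq> d \<Longrightarrow> (e \<in> apply_op opr S d i \<longleftrightarrow> e \<in> S i)"
  by (cases opr) auto

lemma apply_op_unique: "d \<in> apply_op opr S d i \<Longrightarrow> d \<in> apply_op opr S d j
   \<Longrightarrow> d \<notin> S i \<Longrightarrow> d \<notin> S j \<Longrightarrow> i = j"
  by (cases opr) (auto split: if_splits)

lemma apply_op_data: "apply_op opr S d i \<subseteq> insert d (S i)"
  by (cases opr) auto

lemma step_other: "step M c (a,d) c' \<Longrightarrow> e \<noteq> d \<Longrightarrow> (e \<in> snd c' i \<longleftrightarrow> e \<in> snd c i)"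
  by (erule step_E) (simp add: apply_op_other)

lemma step_ins_unique: "step M c (a,d) c' \<Longrightarrow> d \<in> snd c' i \<Longrightarrow> d \<in> snd c' j
   \<Longrightarrow> d \<notin> snd c i \<Longrightarrow> d \<notin> snd c j \<Longrightarrow> i = j"
  by (erule step_E) (metis apply_op_unique)

lemma step_data: "step M c (a,d) c' \<Longrightarrow> snd c' i \<subseteq> insert d (snd c i)"
  by (erule step_E) (simp add: apply_op_data)

lemma runs_data: "c' \<in> runs M c w \<Longrightarrow> snd c' i \<subseteq> snd c i \<union> snd ` set w"
proof (induction w arbitrary: c)
  case Nil then show ?case by simp
next
  case (Cons x w)
  then obtain c1 where "step M c x c1" "c' \<in> runs M c1 w" by (auto simp: runs_Cons_mem)
  obtain a d where x: "x = (a,d)" by (cases x)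
  have 1: "snd c1 i \<subseteq> insert d (snd c i)" using step_data[of M c a d c1 i] \<open>step M c x c1\<close> x by simp
  have 2: "snd c' i \<subseteq> snd c1 i \<union> snd ` set w" using Cons.IH \<open>c' \<in> runs M c1 w\<close> by blast
  show ?case using 1 2 x by auto
qed



lemma acc_snoc_det:
  assumes "safa_det M" "c1 \<in> runs M c w"
  shows "acc M c (w@[(a,d)]) \<longleftrightarrow>
    (\<exists>cd opr q'. (fst c1,a,cd,opr,q') \<in> trans M \<and> cond_sat cd (snd c1) d \<and> q' \<in> finals M)"
proof
  assume "acc M c (w@[(a,d)])"
  then obtain c' c2 where "c2 \<in> runs M c w" "step M c2 (a,d) c'" "fst c' \<in> finals M"
    unfolding acc_snoc by blast
  moreover have "c2 = c1" using assms calculation runs_det by metis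
  ultimately show "\<exists>cd opr q'. (fst c1,a,cd,opr,q') \<in> trans M \<and> cond_sat cd (snd c1) d \<and> q' \<in> finals M"
    unfolding step_def by auto
next
  assume "\<exists>cd opr q'. (fst c1,a,cd,opr,q') \<in> trans M \<and> cond_sat cd (snd c1) d \<and> q' \<in> finals M"
  then obtain cd opr q' where "(fst c1,a,cd,opr,q') \<in> trans M" "cond_sat cd (snd c1) d" "q' \<in> finals M"
    by blast
  then have "step M c1 (a,d) (q', apply_op opr (snd c1) d)" unfolding step_def by auto
  then show "acc M c (w@[(a,d)])" unfolding acc_snoc using assms(2) \<open>q' \<in> finals M\<close>
    by force
qed

lemma core:
  assumes det: "safa_det M"
  and x: "x \<notin> snd ` set u" and zx: "z \<noteq> x"
  and f: "f \<notin> snd ` set u" "f \<noteq> x" "f \<noteq> z"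
  and A1: "acc M (init M, \<lambda>_. {}) (u@[(a,x),(a',x)])"
  and A2: "acc M (init M, \<lambda>_. {}) (u@[(a,x),(a',y)])"
  and A3: "\<not> acc M (init M, \<lambda>_. {}) (u@[(a,x),(a',f)])"
  and A4: "acc M (init M, \<lambda>_. {}) (u@[(a,x),(b,z),(a'',x)])"
  and A5: "\<not> acc M (init M, \<lambda>_. {}) (u@[(a,x),(b,z),(a'',y)])"
  and A6: "\<not> acc M (init M, \<lambda>_. {}) (u@[(a,x),(b,z),(a'',f)])"
  shows False
proof -
  define c0 :: "'a config" where "c0 = (init M, \<lambda>_. {})"
  define w2 where "w2 = u@[(a,x)]"
  define w3 where "w3 = w2@[(b,z)]"
  have e1: "\<And>v. u@[(a,x),v] = w2@[v]" unfolding w2_def by simp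
  have e2: "\<And>v. u@[(a,x),(b,z),v] = w3@[v]" unfolding w3_def w2_def by simp
  note A = A1 A2 A3 A4 A5 A6
  note A = A[unfolded e1 e2, folded c0_def]
  from A(1) obtain c2 where c2: "c2 \<in> runs M c0 w2" unfolding acc_snoc by blast
  from A(4) obtain c3 where c3: "c3 \<in> runs M c0 w3" unfolding acc_snoc by blast
  have f2: "f \<notin> snd c2 i" for i using runs_data[OF c2, of i] f unfolding c0_def w2_def by auto
  have f3: "f \<notin> snd c3 i" for i using runs_data[OF c3, of i] f unfolding c0_def w3_def w2_def by auto
  from A(1)[unfolded acc_snoc_det[OF det c2]] obtain cdx opx qx where
    tx: "(fst c2,a',cdx,opx,qx) \<in> trans M" "cond_sat cdx (snd c2) x" "qx \<in> finals M" by blast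
  obtain j2 where cdx: "cdx = P j2"
  proof (cases cdx)
    case (NP i)
    then have "cond_sat cdx (snd c2) f" using f2 by simp
    then have "acc M c0 (w2@[(a',f)])" unfolding acc_snoc_det[OF det c2] using tx by blast
    then show ?thesis using A(3) by blast
  qed
  from A(2)[unfolded acc_snoc_det[OF det c2]] obtain cdy opy qy where
    ty: "(fst c2,a',cdy,opy,qy) \<in> trans M" "cond_sat cdy (snd c2) y" "qy \<in> finals M" by blast
  obtain j2' where cdy: "cdy = P j2'"
  proof (cases cdy)
    case (NP i)
    then have "cond_sat cdy (snd c2) f" using f2 by simp
    then have "acc M c0 (w2@[(a',f)])" unfolding acc_snoc_det[OF det c2] using ty by blast
    then show ?thesis using A(3) by blast
  qed
  have "cond_idx cdx = cond_idx cdy" using safa_detD[OF det tx(1) ty(1)] by blast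
  then have "j2' = j2" by (simp add: cdx cdy)
  have x2: "x \<in> snd c2 j2" using tx cdx by simp
  have y2: "y \<in> snd c2 j2" using ty cdy \<open>j2' = j2\<close> by simp
  from A(4)[unfolded acc_snoc_det[OF det c3]] obtain cd3 op3 q3 where
    t3: "(fst c3,a'',cd3,op3,q3) \<in> trans M" "cond_sat cd3 (snd c3) x" "q3 \<in> finals M" by blast
  obtain j3 where cd3: "cd3 = P j3"
  proof (cases cd3)
    case (NP i)
    then have "cond_sat cd3 (snd c3) f" using f3 by simp
    then have "acc M c0 (w3@[(a'',f)])" unfolding acc_snoc_det[OF det c3] using t3 by blast
    then show ?thesis using A(6) by blast
  qed
  have y3: "y \<notin> snd c3 j3"
  proof
    assume "y \<in> snd c3 j3"
    then have "cond_sat cd3 (snd c3) y" using cd3 by simp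
    then have "acc M c0 (w3@[(a'',y)])" unfolding acc_snoc_det[OF det c3] using t3 by blast
    then show False using A(5) by blast
  qed
  from c3 obtain c2' where "c2' \<in> runs M c0 w2" "step M c2' (b,z) c3"
    unfolding w3_def runs_snoc_mem by blast
  then have st: "step M c2 (b,z) c3" using runs_det[OF det c2] by metis
  have "y \<in> snd c3 j2" using step_mono[OF st] y2 by blast
  then have "j2 \<noteq> j3" using y3 by blast
  have x3: "x \<in> snd c3 j3" using t3 cd3 by simp
  have x2': "x \<in> snd c2 j3" using step_other[OF st zx[symmetric]] x3 by blast
  from c2 obtain c1 where c1: "c1 \<in> runs M c0 u" "step M c1 (a,x) c2"
    unfolding w2_def runs_snoc_mem by blast
  have "x \<notin> snd c1 i" for i
  proof -
    have "snd c1 i \<subseteq> snd c0 i \<union> snd ` set u" by (rule runs_data[OF c1(1)])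
    moreover have "snd c0 i = {}" unfolding c0_def by simp
    ultimately show ?thesis using x by blast
  qed
  then have "j2 = j3" using step_ins_unique[OF c1(2) x2 x2'] by simp
  then show False using \<open>j2 \<noteq> j3\<close> by blast
qed



lemma list_cases5:
  obtains "w = []" | a1 d1 where "w = [(a1,d1)]" | a1 d1 a2 d2 where "w = [(a1,d1),(a2,d2)]"
  | a1 d1 a2 d2 a3 d3 where "w = [(a1,d1),(a2,d2),(a3,d3)]"
  | a1 d1 a2 d2 a3 d3 a4 d4 where "w = [(a1,d1),(a2,d2),(a3,d3),(a4,d4)]"
  | a1 d1 a2 d2 a3 d3 a4 d4 a5 d5 r where "w = (a1,d1)#(a2,d2)#(a3,d3)#(a4,d4)#(a5,d5)#r"
  by (metis list.exhaust prod.exhaust)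

lemma list_cases9:
  obtains "w = []" | a1 d1 where "w = [(a1,d1)]" | a1 d1 a2 d2 where "w = [(a1,d1),(a2,d2)]"
  | a1 d1 a2 d2 a3 d3 where "w = [(a1,d1),(a2,d2),(a3,d3)]"
  | a1 d1 a2 d2 a3 d3 a4 d4 where "w = [(a1,d1),(a2,d2),(a3,d3),(a4,d4)]"
  | a1 d1 a2 d2 a3 d3 a4 d4 a5 d5 where "w = [(a1,d1),(a2,d2),(a3,d3),(a4,d4),(a5,d5)]"
  | a1 d1 a2 d2 a3 d3 a4 d4 a5 d5 a6 d6 where "w = [(a1,d1),(a2,d2),(a3,d3),(a4,d4),(a5,d5),(a6,d6)]"
  | a1 d1 a2 d2 a3 d3 a4 d4 a5 d5 a6 d6 a7 d7 where
     "w = [(a1,d1),(a2,d2),(a3,d3),(a4,d4),(a5,d5),(a6,d6),(a7,d7)]"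
  | a1 d1 a2 d2 a3 d3 a4 d4 a5 d5 a6 d6 a7 d7 a8 d8 where
     "w = [(a1,d1),(a2,d2),(a3,d3),(a4,d4),(a5,d5),(a6,d6),(a7,d7),(a8,d8)]"
  | a1 d1 a2 d2 a3 d3 a4 d4 a5 d5 a6 d6 a7 d7 a8 d8 a9 d9 r where
     "w = (a1,d1)#(a2,d2)#(a3,d3)#(a4,d4)#(a5,d5)#(a6,d6)#(a7,d7)#(a8,d8)#(a9,d9)#r"
  by (metis list.exhaust prod.exhaust)

lemma words_Cons: "(x#w) \<in> words \<Sigma> \<longleftrightarrow> fst x \<in> \<Sigma> \<and> w \<in> words \<Sigma>"
  by (cases x) (auto simp: words_def)
lemma words_Nil: "[] \<in> words \<Sigma>" by (simp add: words_def)

lemma safa_det_I: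
  assumes "\<forall>(q,a,c1,o1,q1)\<in>trans M. \<forall>(q',a',c2,o2,q2)\<in>trans M. q = q' \<and> a = a' \<longrightarrow>
     cond_idx c1 = cond_idx c2 \<and> (c1 = c2 \<longrightarrow> o1 = o2 \<and> q1 = q2)"
  shows "safa_det M"
  unfolding safa_det_def
proof (intro allI impI)
  fix q a c1 o1 q1 c2 o2 q2
  assume "(q, a, c1, o1, q1) \<in> trans M \<and> (q, a, c2, o2, q2) \<in> trans M"
  then show "cond_idx c1 = cond_idx c2 \<and> (c1 = c2 \<longrightarrow> o1 = o2 \<and> q1 = q2)"
    using bspec[OF assms, of "(q, a, c1, o1, q1)"] by (auto dest: bspec[of _ _ "(q, a, c2, o2, q2)"])
qed

lemma acc_Cons2: "acc M (q,S) ((a,d) # w) \<longleftrightarrow>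
   (\<exists>(q0,a0,cd,opr,q')\<in>trans M. q0 = q \<and> a0 = a \<and> cond_sat cd S d \<and> acc M (q', apply_op opr S d) w)"
  unfolding acc_Cons by blast

definition M1 :: safa where "M1 = \<lparr>states = {0,1,2,3}, init = 0, finals = {3}, nsets = 1,
  trans = {(0,0,NP 0,Ins 0,1), (1,0,P 0,Ins 0,2), (1,0,NP 0,Ins 0,2), (2,0,P 0,NoOp,3)}\<rparr>"
lemma tM1: "trans M1 = {(0,0,NP 0,Ins 0,1), (1,0,P 0,Ins 0,2), (1,0,NP 0,Ins 0,2), (2,0,P 0,NoOp,3)}" by (simp add: M1_def)
lemma iM1: "init M1 = 0" by (simp add: M1_def)
lemma fM1: "finals M1 = {3}" by (simp add: M1_def)

definition L1 :: "(nat \<times> 'd) list set" where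
  "L1 = {[(0,a),(0,b),(0,c)] | a b c. c = a \<or> c = b}"

lemma dsafa_L1: "dsafa_lang {0} L1"
proof -
  have "safa_wf {0} M1" unfolding safa_wf_def M1_def by auto
  moreover have "safa_det M1" apply (rule safa_det_I) unfolding tM1 apply (simp only: ball_simps(5,7)) apply (simp only: prod.case) by simp
  moreover have "lang {0} M1 = L1"
  proof (rule set_eqI)
    fix w :: "(nat \<times> 'd) list"
    show "w \<in> lang {0} M1 \<longleftrightarrow> w \<in> L1"
      unfolding lang_acc
      by (cases w rule: list_cases5; (simp add: acc_Cons2 tM1 iM1 fM1 words_Cons words_Nil L1_def del: acc_Cons)?; (blast | auto)?)
  qed
  ultimately show ?thesis unfolding dsafa_lang_def by blast
qed

definition M2 :: safa where "M2 = \<lparr>states = {0,1,2,3,4}, init = 0, finals = {4}, nsets = 1,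
  trans = {(0,0,NP 0,NoOp,1), (1,0,NP 0,Ins 0,2), (2,0,P 0,Ins 0,3), (2,0,NP 0,Ins 0,3), (3,0,P 0,NoOp,4)}\<rparr>"
lemma tM2: "trans M2 = {(0,0,NP 0,NoOp,1), (1,0,NP 0,Ins 0,2), (2,0,P 0,Ins 0,3), (2,0,NP 0,Ins 0,3), (3,0,P 0,NoOp,4)}" by (simp add: M2_def)
lemma iM2: "init M2 = 0" by (simp add: M2_def)
lemma fM2: "finals M2 = {4}" by (simp add: M2_def)

definition L2 :: "(nat \<times> 'd) list set" where
  "L2 = {[(0,a),(0,b),(0,c),(0,d)] | a b c d. d = b \<or> d = c}"

lemma dsafa_L2: "dsafa_lang {0} L2"
proof -
  have "safa_wf {0} M2" unfolding safa_wf_def M2_def by auto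
  moreover have "safa_det M2" apply (rule safa_det_I) unfolding tM2 apply (simp only: ball_simps(5,7)) apply (simp only: prod.case) by simp
  moreover have "lang {0} M2 = L2"
  proof (rule set_eqI)
    fix w :: "(nat \<times> 'd) list"
    show "w \<in> lang {0} M2 \<longleftrightarrow> w \<in> L2"
      unfolding lang_acc
      by (cases w rule: list_cases5; (simp add: acc_Cons2 tM2 iM2 fM2 words_Cons words_Nil L2_def del: acc_Cons)?; (blast | auto)?)
  qed
  ultimately show ?thesis unfolding dsafa_lang_def by blast
qed

definition M3 :: safa where "M3 = \<lparr>states = {0,1}, init = 0, finals = {0,1}, nsets = 1,
  trans = {(0,0,NP 0,NoOp,1)}\<rparr>"
lemma tM3: "trans M3 = {(0,0,NP 0,NoOp,1)}" by (simp add: M3_def)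
lemma iM3: "init M3 = 0" by (simp add: M3_def)
lemma fM3: "finals M3 = {0,1}" by (simp add: M3_def)

definition L3 :: "(nat \<times> 'd) list set" where
  "L3 = {[]} \<union> {[(0,a)] | a. True}"

lemma dsafa_L3: "dsafa_lang {0} L3"
proof -
  have "safa_wf {0} M3" unfolding safa_wf_def M3_def by auto
  moreover have "safa_det M3" apply (rule safa_det_I) unfolding tM3 apply (simp only: ball_simps(5,7)) apply (simp only: prod.case) by simp
  moreover have "lang {0} M3 = L3"
  proof (rule set_eqI)
    fix w :: "(nat \<times> 'd) list"
    show "w \<in> lang {0} M3 \<longleftrightarrow> w \<in> L3"
      unfolding lang_acc
      by (cases w rule: list_cases5; (simp add: acc_Cons2 tM3 iM3 fM3 words_Cons words_Nil L3_def del: acc_Cons)?; (blast | auto)?)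
  qed
  ultimately show ?thesis unfolding dsafa_lang_def by blast
qed

definition M4 :: safa where "M4 = \<lparr>states = {0,1,2,3,4,5}, init = 0, finals = {1,3}, nsets = 1,
  trans = {(0,1,NP 0,Ins 0,1), (1,0,NP 0,NoOp,2), (1,0,P 0,NoOp,2), (2,0,P 0,NoOp,3),
           (0,0,NP 0,Ins 0,4), (4,0,P 0,NoOp,3), (4,2,P 0,NoOp,5), (4,2,NP 0,NoOp,5), (5,0,P 0,NoOp,3)}\<rparr>"
lemma tM4: "trans M4 = {(0,1,NP 0,Ins 0,1), (1,0,NP 0,NoOp,2), (1,0,P 0,NoOp,2), (2,0,P 0,NoOp,3),
           (0,0,NP 0,Ins 0,4), (4,0,P 0,NoOp,3), (4,2,P 0,NoOp,5), (4,2,NP 0,NoOp,5), (5,0,P 0,NoOp,3)}" by (simp add: M4_def)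
lemma iM4: "init M4 = 0" by (simp add: M4_def)
lemma fM4: "finals M4 = {1,3}" by (simp add: M4_def)

definition L4 :: "(nat \<times> 'd) list set" where
  "L4 = {[(1,a)] | a. True} \<union> {[(0,a),(0,a)] | a. True} \<union> {[(1,a),(0,b),(0,a)] | a b. True}
     \<union> {[(0,a),(2,b),(0,a)] | a b. True}"

lemma dsafa_L4: "dsafa_lang {0,1,2} L4"
proof -
  have "safa_wf {0,1,2} M4" unfolding safa_wf_def M4_def by auto
  moreover have "safa_det M4" apply (rule safa_det_I) unfolding tM4 apply (simp only: ball_simps(5,7)) apply (simp only: prod.case) by simp
  moreover have "lang {0,1,2} M4 = L4"
  proof (rule set_eqI)
    fix w :: "(nat \<times> 'd) list"
    show "w \<in> lang {0,1,2} M4 \<longleftrightarrow> w \<in> L4"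
      unfolding lang_acc
      by (cases w rule: list_cases5; (simp add: acc_Cons2 tM4 iM4 fM4 words_Cons words_Nil L4_def del: acc_Cons)?; (blast | auto)?)
  qed
  ultimately show ?thesis unfolding dsafa_lang_def by blast
qed

definition M5 :: safa where "M5 = \<lparr>states = {0,1,2,3,4,5,6,7}, init = 0, finals = {4,5,7}, nsets = 1,
  trans = {(0,0,NP 0,Ins 0,1), (1,0,P 0,NoOp,2), (1,0,NP 0,NoOp,3), (2,0,P 0,NoOp,4),
     (2,0,NP 0,NoOp,5), (3,0,P 0,NoOp,4), (4,0,P 0,NoOp,7), (4,0,NP 0,NoOp,7)}\<rparr>"
lemma tM5: "trans M5 = {(0,0,NP 0,Ins 0,1), (1,0,P 0,NoOp,2), (1,0,NP 0,NoOp,3), (2,0,P 0,NoOp,4),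
     (2,0,NP 0,NoOp,5), (3,0,P 0,NoOp,4), (4,0,P 0,NoOp,7), (4,0,NP 0,NoOp,7)}" by (simp add: M5_def)
lemma iM5: "init M5 = 0" by (simp add: M5_def)
lemma fM5: "finals M5 = {4,5,7}" by (simp add: M5_def)

definition L5 :: "(nat \<times> 'd) list set" where
  "L5 = {[(0,v),(0,a),(0,b)] | v a b. v = a \<or> v = b} \<union> {[(0,v),(0,a),(0,b),(0,c)] | v a b c. v = b}"

lemma dsafa_L5: "dsafa_lang {0} L5"
proof -
  have "safa_wf {0} M5" unfolding safa_wf_def M5_def by auto
  moreover have "safa_det M5" apply (rule safa_det_I) unfolding tM5 apply (simp only: ball_simps(5,7)) apply (simp only: prod.case) by simp
  moreover have "lang {0} M5 = L5"
  proof (rule set_eqI)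
    fix w :: "(nat \<times> 'd) list"
    show "w \<in> lang {0} M5 \<longleftrightarrow> w \<in> L5"
      unfolding lang_acc
      by (cases w rule: list_cases5; (simp add: acc_Cons2 tM5 iM5 fM5 words_Cons words_Nil L5_def del: acc_Cons)?; (blast | auto)?)
  qed
  ultimately show ?thesis unfolding dsafa_lang_def by blast
qed

definition M6 :: safa where "M6 = \<lparr>states = {0,1,2,3,4,5,6,7,8}, init = 0, finals = {3,6,8}, nsets = 1,
  trans = {(0,1,NP 0,Ins 0,1), (1,0,P 0,NoOp,2), (1,0,NP 0,NoOp,2), (2,0,P 0,NoOp,3),
     (0,0,NP 0,NoOp,4), (4,1,NP 0,Ins 0,5), (5,0,P 0,NoOp,6), (5,0,NP 0,NoOp,7),
     (6,0,P 0,NoOp,8), (7,0,P 0,NoOp,8)}\<rparr>"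
lemma tM6: "trans M6 = {(0,1,NP 0,Ins 0,1), (1,0,P 0,NoOp,2), (1,0,NP 0,NoOp,2), (2,0,P 0,NoOp,3),
     (0,0,NP 0,NoOp,4), (4,1,NP 0,Ins 0,5), (5,0,P 0,NoOp,6), (5,0,NP 0,NoOp,7),
     (6,0,P 0,NoOp,8), (7,0,P 0,NoOp,8)}" by (simp add: M6_def)
lemma iM6: "init M6 = 0" by (simp add: M6_def)
lemma fM6: "finals M6 = {3,6,8}" by (simp add: M6_def)

definition L6 :: "(nat \<times> 'd) list set" where
  "L6 = {[(1,a),(0,b),(0,c)] | a b c. c = a} \<union> {[(0,a),(1,b),(0,c)] | a b c. c = b}
     \<union> {[(0,a),(1,b),(0,c),(0,d)] | a b c d. d = b}"

lemma dsafa_L6: "dsafa_lang {0,1} L6"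
proof -
  have "safa_wf {0,1} M6" unfolding safa_wf_def M6_def by auto
  moreover have "safa_det M6" apply (rule safa_det_I) unfolding tM6 apply (simp only: ball_simps(5,7)) apply (simp only: prod.case) by simp
  moreover have "lang {0,1} M6 = L6"
  proof (rule set_eqI)
    fix w :: "(nat \<times> 'd) list"
    show "w \<in> lang {0,1} M6 \<longleftrightarrow> w \<in> L6"
      unfolding lang_acc
      by (cases w rule: list_cases5; (simp add: acc_Cons2 tM6 iM6 fM6 words_Cons words_Nil L6_def del: acc_Cons)?; (blast | auto)?)
  qed
  ultimately show ?thesis unfolding dsafa_lang_def by blast
qed

definition M7 :: safa where "M7 = \<lparr>states = {0,1,2,3,4,5,6,7,8,9,10}, init = 0, finals = {7,10}, nsets = 3,
  trans = {(0,0,NP 2,Ins 0,1), (1,0,NP 2,NoOp,2), (2,0,NP 2,Ins 0,3), (3,0,NP 2,Ins 1,4),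
     (4,0,P 0,NoOp,5), (4,0,NP 0,NoOp,6), (5,0,NP 2,NoOp,7), (6,0,NP 2,NoOp,8),
     (7,0,NP 2,NoOp,9), (8,0,NP 2,NoOp,9), (9,0,P 1,NoOp,10)}\<rparr>"

lemma tM7: "trans M7 = {(0,0,NP 2,Ins 0,1), (1,0,NP 2,NoOp,2), (2,0,NP 2,Ins 0,3), (3,0,NP 2,Ins 1,4),
     (4,0,P 0,NoOp,5), (4,0,NP 0,NoOp,6), (5,0,NP 2,NoOp,7), (6,0,NP 2,NoOp,8),
     (7,0,NP 2,NoOp,9), (8,0,NP 2,NoOp,9), (9,0,P 1,NoOp,10)}" by (simp add: M7_def)
lemma iM7: "init M7 = 0" by (simp add: M7_def)
lemma fM7: "finals M7 = {7,10}" by (simp add: M7_def)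
definition L7 :: "(nat \<times> 'd) list set" where
  "L7 = {[(0,a),(0,b),(0,c),(0,d),(0,e),(0,g)] | a b c d e g. e = a \<or> e = c}
     \<union> {[(0,a),(0,b),(0,c),(0,d),(0,e),(0,g),(0,i),(0,j)] | a b c d e g i j. j = d}"

lemma dsafa_L7: "dsafa_lang {0} L7"
proof -
  have "safa_wf {0} M7" unfolding safa_wf_def M7_def by auto
  moreover have "safa_det M7" apply (rule safa_det_I) unfolding tM7 apply (simp only: ball_simps(5,7)) apply (simp only: prod.case) by simp
  moreover have "lang {0} M7 = L7"
  proof (rule set_eqI)
    fix w :: "(nat \<times> 'd) list"
    show "w \<in> lang {0} M7 \<longleftrightarrow> w \<in> L7"
      unfolding lang_acc
      by (cases w rule: list_cases9; (simp add: acc_Cons2 tM7 iM7 fM7 words_Cons words_Nil L7_def del: acc_Cons)?; (blast | auto)?)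
  qed
  ultimately show ?thesis unfolding dsafa_lang_def by blast
qed



definition sink :: "safa \<Rightarrow> nat" where "sink M = Suc (Max (states M))"
definition has_tr :: "safa \<Rightarrow> nat \<Rightarrow> nat \<Rightarrow> bool" where
  "has_tr M q a \<longleftrightarrow> (\<exists>c opr q'. (q,a,c,opr,q') \<in> trans M)"
definition tidx :: "safa \<Rightarrow> nat \<Rightarrow> nat \<Rightarrow> nat" where
  "tidx M q a = (if has_tr M q a then cond_idx (SOME c. \<exists>opr q'. (q,a,c,opr,q') \<in> trans M) else 0)"
definition csafa :: "nat set \<Rightarrow> safa \<Rightarrow> safa" where
  "csafa \<Sigma> M = \<lparr>states = insert (sink M) (states M), init = init M,
     finals = insert (sink M) (states M) - finals M, nsets = max 1 (nsets M),
     trans = trans M \<union> {(q,a,c,NoOp,sink M) | q a c. q \<in> insert (sink M) (states M) \<and> a \<in> \<Sigma>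
        \<and> cond_idx c = tidx M q a \<and> \<not>(\<exists>opr q'. (q,a,c,opr,q') \<in> trans M)}\<rparr>"

lemma sink_notin: "finite (states M) \<Longrightarrow> sink M \<notin> states M"
proof
  assume f: "finite (states M)" and "sink M \<in> states M"
  then have "Suc (Max (states M)) \<le> Max (states M)" using Max_ge[OF f] unfolding sink_def by blast
  then show False by simp
qed

lemma tidx_eq: assumes "safa_det M" "(q,a,c,opr,q') \<in> trans M" shows "tidx M q a = cond_idx c"
proof -
  have h: "has_tr M q a" using assms(2) unfolding has_tr_def by blast
  have "\<exists>opr q'. (q,a,(SOME c. \<exists>opr q'. (q,a,c,opr,q') \<in> trans M),opr,q') \<in> trans M"
    by (rule someI_ex) (use assms(2) in blast)
  then obtain o0 q0 where "(q,a,(SOME c. \<exists>opr q'. (q,a,c,opr,q') \<in> trans M),o0,q0) \<in> trans M" by blast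
  from safa_detD[OF assms(1) this assms(2)] show ?thesis using h unfolding tidx_def by simp
qed

lemma tidx_lt: assumes "safa_wf \<Sigma> M" shows "tidx M q a < max 1 (nsets M)"
proof (cases "has_tr M q a")
  case True
  have "\<exists>opr q'. (q,a,(SOME c. \<exists>opr q'. (q,a,c,opr,q') \<in> trans M),opr,q') \<in> trans M"
    by (rule someI_ex) (use True in \<open>auto simp: has_tr_def\<close>)
  then show ?thesis using True assms unfolding tidx_def safa_wf_def by fastforce
qed (simp add: tidx_def)

lemma op_ok_mono: "op_ok m opr \<Longrightarrow> m \<le> n \<Longrightarrow> op_ok n opr"
  by (cases opr) auto

lemma csafa_wf: assumes "safa_wf \<Sigma> M" shows "safa_wf \<Sigma> (csafa \<Sigma> M)"
proof -
  have "\<forall>(q, a, c, opr, q') \<in> trans M. q \<in> states M \<and> a \<in> \<Sigma> \<and> cond_idx c < nsets M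
            \<and> op_ok (nsets M) opr \<and> q' \<in> states M"
    using assms unfolding safa_wf_def by blast
  then have "\<forall>(q, a, c, opr, q') \<in> trans M. q \<in> states M \<and> a \<in> \<Sigma> \<and> cond_idx c < max 1 (nsets M)
            \<and> op_ok (max 1 (nsets M)) opr \<and> q' \<in> states M"
    using op_ok_mono by fastforce
  then show ?thesis using assms tidx_lt[OF assms] unfolding safa_wf_def csafa_def by auto
qed

lemma csafa_det: assumes "safa_det M" shows "safa_det (csafa \<Sigma> M)"
  unfolding safa_det_def
proof (intro allI impI)
  fix q a c1 o1 q1 c2 o2 q2
  assume "(q, a, c1, o1, q1) \<in> trans (csafa \<Sigma> M) \<and> (q, a, c2, o2, q2) \<in> trans (csafa \<Sigma> M)"
  then have t1: "(q, a, c1, o1, q1) \<in> trans M \<or> (cond_idx c1 = tidx M q a \<and> o1 = NoOp \<and> q1 = sink M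
      \<and> \<not>(\<exists>opr q'. (q,a,c1,opr,q') \<in> trans M))"
    and t2: "(q, a, c2, o2, q2) \<in> trans M \<or> (cond_idx c2 = tidx M q a \<and> o2 = NoOp \<and> q2 = sink M
      \<and> \<not>(\<exists>opr q'. (q,a,c2,opr,q') \<in> trans M))"
    unfolding csafa_def by auto
  show "cond_idx c1 = cond_idx c2 \<and> (c1 = c2 \<longrightarrow> o1 = o2 \<and> q1 = q2)"
  proof (cases "(q, a, c1, o1, q1) \<in> trans M")
    case T1: True
    show ?thesis
    proof (cases "(q, a, c2, o2, q2) \<in> trans M")
      case True
      show ?thesis by (rule safa_detD[OF assms T1 True])
    next
      case False
      then have "cond_idx c2 = tidx M q a" "\<not>(\<exists>opr q'. (q,a,c2,opr,q') \<in> trans M)" using t2 by auto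
      then show ?thesis using tidx_eq[OF assms T1] T1 by auto
    qed
  next
    case F1: False
    then have f1: "cond_idx c1 = tidx M q a" "\<not>(\<exists>opr q'. (q,a,c1,opr,q') \<in> trans M)"
      "o1 = NoOp" "q1 = sink M" using t1 by auto
    show ?thesis
    proof (cases "(q, a, c2, o2, q2) \<in> trans M")
      case True
      then show ?thesis using tidx_eq[OF assms True] f1 by auto
    next
      case False
      then show ?thesis using t2 f1 by auto
    qed
  qed
qed

lemma csafa_complete:
  assumes "q \<in> states (csafa \<Sigma> M)" "a \<in> \<Sigma>"
  shows "\<exists>c'. step (csafa \<Sigma> M) (q,S) (a,d) c'"
proof -
  define i where "i = tidx M q a"
  define cd where "cd = (if d \<in> S i then P i else NP i)"
  have sat: "cond_sat cd S d" and ci: "cond_idx cd = i" unfolding cd_def by auto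
  show ?thesis
  proof (cases "\<exists>opr q'. (q,a,cd,opr,q') \<in> trans M")
    case True
    then obtain opr q' where "(q,a,cd,opr,q') \<in> trans M" by blast
    then have "(q,a,cd,opr,q') \<in> trans (csafa \<Sigma> M)" unfolding csafa_def by auto
    then show ?thesis using sat unfolding step_simp by blast
  next
    case False
    then have "(q,a,cd,NoOp,sink M) \<in> trans (csafa \<Sigma> M)"
      using assms ci unfolding csafa_def i_def by auto
    then show ?thesis using sat unfolding step_simp by blast
  qed
qed

lemma step_trans_mono: "trans M \<subseteq> trans M' \<Longrightarrow> step M c x c' \<Longrightarrow> step M' c x c'"
  unfolding step_def by blast

lemma runs_trans_mono: "trans M \<subseteq> trans M' \<Longrightarrow> runs M c w \<subseteq> runs M' c w"
proof (induction w arbitrary: c)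
  case Nil then show ?case by simp
next
  case (Cons x w)
  show ?case
  proof
    fix c'' assume "c'' \<in> runs M c (x#w)"
    then obtain c' where "step M c x c'" "c'' \<in> runs M c' w" by (auto simp: runs_Cons_mem)
    moreover have "step M' c x c'" by (rule step_trans_mono[OF Cons.prems]) fact
    moreover have "c'' \<in> runs M' c' w" using Cons.IH[OF Cons.prems] calculation(2) by blast
    ultimately show "c'' \<in> runs M' c (x#w)" unfolding runs_Cons_mem by blast
  qed
qed

lemma csafa_step_cases: "step (csafa \<Sigma> M) c x c' \<Longrightarrow> step M c x c' \<or> fst c' = sink M"
  unfolding step_def csafa_def by auto

lemma runs_states: "safa_wf \<Sigma> M \<Longrightarrow> fst c \<in> states M \<Longrightarrow> c' \<in> runs M c w \<Longrightarrow> fst c' \<in> states M"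
proof (induction w arbitrary: c)
  case Nil then show ?case by simp
next
  case (Cons x w)
  then obtain c1 where "step M c x c1" "c' \<in> runs M c1 w" by (auto simp: runs_Cons_mem)
  moreover have "fst c1 \<in> states M" using Cons.prems(1) calculation(1)
    unfolding step_def safa_wf_def by blast
  ultimately show ?case using Cons by blast
qed

lemma sink_stays:
  assumes "safa_wf \<Sigma> M" "fst c = sink M" "c' \<in> runs (csafa \<Sigma> M) c w"
  shows "fst c' = sink M"
  using assms(2,3)
proof (induction w arbitrary: c)
  case Nil then show ?case by simp
next
  case (Cons x w)
  then obtain c1 where s: "step (csafa \<Sigma> M) c x c1" "c' \<in> runs (csafa \<Sigma> M) c1 w"
    by (auto simp: runs_Cons_mem)
  have "sink M \<notin> states M" using assms(1) sink_notin unfolding safa_wf_def by blast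
  then have "\<not> step M c x c1" using Cons.prems(1) assms(1) unfolding step_def safa_wf_def by fastforce
  then have "fst c1 = sink M" using csafa_step_cases[OF s(1)] by blast
  then show ?case using Cons.IH s(2) by blast
qed

lemma runs_empty_sink:
  assumes "safa_wf \<Sigma> M" "runs M c w = {}" "c' \<in> runs (csafa \<Sigma> M) c w"
  shows "fst c' = sink M"
  using assms(2,3)
proof (induction w arbitrary: c)
  case Nil then show ?case by simp
next
  case (Cons x w)
  then obtain c1 where s: "step (csafa \<Sigma> M) c x c1" "c' \<in> runs (csafa \<Sigma> M) c1 w"
    by (auto simp: runs_Cons_mem)
  show ?case
  proof (cases "step M c x c1")
    case True
    have "c'' \<in> runs M c (x#w)" if "c'' \<in> runs M c1 w" for c''
      unfolding runs_Cons_mem using True that by blast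
    then have "runs M c1 w = {}" using Cons.prems(1) by blast
    then show ?thesis using Cons.IH s(2) by blast
  next
    case False
    then have "fst c1 = sink M" using csafa_step_cases[OF s(1)] by blast
    then show ?thesis using sink_stays[OF assms(1) _ s(2)] by blast
  qed
qed

lemma runs_nonempty:
  assumes "safa_wf \<Sigma> M" "fst c \<in> states (csafa \<Sigma> M)" "w \<in> words \<Sigma>"
  shows "runs (csafa \<Sigma> M) c w \<noteq> {}"
  using assms(2,3)
proof (induction w arbitrary: c)
  case Nil then show ?case by simp
next
  case (Cons x w)
  obtain a d where x: "x = (a,d)" by (cases x)
  have a: "a \<in> \<Sigma>" and w: "w \<in> words \<Sigma>" using Cons.prems(2) x unfolding words_def by auto
  obtain c1 where s: "step (csafa \<Sigma> M) c x c1"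
    using csafa_complete[OF Cons.prems(1) a, of "snd c" d] x by (cases c) auto
  have "fst c1 \<in> states (csafa \<Sigma> M)" using s csafa_wf[OF assms(1)]
    unfolding step_def safa_wf_def by blast
  then obtain c' where "c' \<in> runs (csafa \<Sigma> M) c1 w" using Cons.IH w by blast
  then have "c' \<in> runs (csafa \<Sigma> M) c (x#w)" unfolding runs_Cons_mem using s by blast
  then show ?case by blast
qed

lemma csafa_lang:
  assumes wf: "safa_wf \<Sigma> M" and det: "safa_det M"
  shows "lang \<Sigma> (csafa \<Sigma> M) = words \<Sigma> - lang \<Sigma> M"
proof (rule set_eqI)
  fix w :: "(nat \<times> 'a) list"
  define c0 :: "'a config" where "c0 = (init M, \<lambda>_. {})"
  have i: "init (csafa \<Sigma> M) = init M" unfolding csafa_def by simp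
  have sn: "sink M \<notin> states M" using wf sink_notin unfolding safa_wf_def by blast
  have fin: "finals M \<subseteq> states M" using wf unfolding safa_wf_def by blast
  have tm: "trans M \<subseteq> trans (csafa \<Sigma> M)" unfolding csafa_def by auto
  have F: "finals (csafa \<Sigma> M) = insert (sink M) (states M) - finals M" unfolding csafa_def by simp
  have c0s: "fst c0 \<in> states M" using wf unfolding c0_def safa_wf_def by simp
  show "w \<in> lang \<Sigma> (csafa \<Sigma> M) \<longleftrightarrow> w \<in> words \<Sigma> - lang \<Sigma> M"
  proof (cases "w \<in> words \<Sigma>")
    case False then show ?thesis unfolding lang_def by auto
  next
    case True
    have "(\<exists>c'\<in>runs (csafa \<Sigma> M) c0 w. fst c' \<in> finals (csafa \<Sigma> M)) \<longleftrightarrow>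
          \<not> (\<exists>c\<in>runs M c0 w. fst c \<in> finals M)"
    proof
      assume "\<exists>c'\<in>runs (csafa \<Sigma> M) c0 w. fst c' \<in> finals (csafa \<Sigma> M)"
      then obtain c' where c': "c' \<in> runs (csafa \<Sigma> M) c0 w" "fst c' \<in> finals (csafa \<Sigma> M)" by blast
      show "\<not> (\<exists>c\<in>runs M c0 w. fst c \<in> finals M)"
      proof
        assume "\<exists>c\<in>runs M c0 w. fst c \<in> finals M"
        then obtain c where c: "c \<in> runs M c0 w" "fst c \<in> finals M" by blast
        then have "c \<in> runs (csafa \<Sigma> M) c0 w" using runs_trans_mono[OF tm] by blast
        then have "c = c'" using runs_det[OF csafa_det[OF det] _ c'(1)] by blast
        then show False using c'(2) c(2) F by simp
      qed
    next
      assume na: "\<not> (\<exists>c\<in>runs M c0 w. fst c \<in> finals M)"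
      show "\<exists>c'\<in>runs (csafa \<Sigma> M) c0 w. fst c' \<in> finals (csafa \<Sigma> M)"
      proof (cases "runs M c0 w = {}")
        case True
        have "fst c0 \<in> states (csafa \<Sigma> M)" using c0s unfolding csafa_def by simp
        then obtain c' where c': "c' \<in> runs (csafa \<Sigma> M) c0 w"
          using runs_nonempty[OF wf _ \<open>w \<in> words \<Sigma>\<close>] by blast
        then have "fst c' = sink M" using runs_empty_sink[OF wf True] by blast
        then show ?thesis using c' F sn fin by auto
      next
        case False
        then obtain c where c: "c \<in> runs M c0 w" by blast
        then have "fst c \<in> states M" using runs_states[OF wf c0s] by blast
        moreover have "fst c \<notin> finals M" using na c by blast
        moreover have "c \<in> runs (csafa \<Sigma> M) c0 w" using runs_trans_mono[OF tm] c by blast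
        ultimately show ?thesis using F by auto
      qed
    qed
    then show ?thesis using True unfolding lang_def c0_def i by auto
  qed
qed

lemma dsafa_compl: "dsafa_lang \<Sigma> L \<Longrightarrow> dsafa_lang \<Sigma> (words \<Sigma> - L)"
  unfolding dsafa_lang_def using csafa_lang csafa_wf csafa_det by metis



lemma not_dsafa:
  assumes "dsafa_lang \<Sigma> K" "set u \<subseteq> \<Sigma> \<times> UNIV" "a \<in> \<Sigma>" "b \<in> \<Sigma>" "a' \<in> \<Sigma>" "a'' \<in> \<Sigma>"
    "x \<notin> snd ` set u" "z \<noteq> x" "f \<notin> snd ` set u" "f \<noteq> x" "f \<noteq> z"
    "u@[(a,x),(a',x)] \<in> K" "u@[(a,x),(a',y)] \<in> K" "u@[(a,x),(a',f)] \<notin> K"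
    "u@[(a,x),(b,z),(a'',x)] \<in> K" "u@[(a,x),(b,z),(a'',y)] \<notin> K" "u@[(a,x),(b,z),(a'',f)] \<notin> K"
  shows False
proof -
  obtain M where M: "safa_wf \<Sigma> M" "safa_det M" "lang \<Sigma> M = K"
    using assms(1) unfolding dsafa_lang_def by blast
  have W: "v \<in> K \<longleftrightarrow> acc M (init M, \<lambda>_. {}) v" if "set v \<subseteq> \<Sigma> \<times> UNIV" for v
    using M(3) that unfolding lang_acc words_def by auto
  have s1: "set (u@[(a,x),(a',v)]) \<subseteq> \<Sigma> \<times> UNIV" for v using assms(2-6) by simp
  have s2: "set (u@[(a,x),(b,z),(a'',v)]) \<subseteq> \<Sigma> \<times> UNIV" for v using assms(2-6) by simp
  note c = core[OF M(2) assms(7-11)]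
  show False
    apply (rule c)
    apply (rule iffD1[OF W[OF s1[of x]] assms(12)])
    apply (rule iffD1[OF W[OF s1[of y]] assms(13)])
    apply (rule notI, drule iffD2[OF W[OF s1[of f]]], rule notE[OF assms(14)], assumption)
    apply (rule iffD1[OF W[OF s2[of x]] assms(15)])
    apply (rule notI, drule iffD2[OF W[OF s2[of y]]], rule notE[OF assms(16)], assumption)
    apply (rule notI, drule iffD2[OF W[OF s2[of f]]], rule notE[OF assms(17)], assumption)
    done
qed

lemma dsafa_words: "dsafa_lang \<Sigma> L \<Longrightarrow> L \<subseteq> words \<Sigma>"
  unfolding dsafa_lang_def lang_def by blast

lemma kstar_Nil[simp]: "[] \<in> kstar L"
  unfolding kstar_def by (rule CollectI, rule exI[of _ "[]"]) simp

lemma kstar_Cons: assumes "[] \<notin> L"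
  shows "x#w \<in> kstar L \<longleftrightarrow> (\<exists>u v. u \<in> L \<and> x#w = u@v \<and> v \<in> kstar L)"
proof
  assume "x#w \<in> kstar L"
  then obtain us where us: "x#w = concat us" "set us \<subseteq> L" unfolding kstar_def by blast
  then obtain u us' where "us = u#us'" by (cases us) auto
  then show "\<exists>u v. u \<in> L \<and> x#w = u@v \<and> v \<in> kstar L"
    using us unfolding kstar_def by auto
next
  assume "\<exists>u v. u \<in> L \<and> x#w = u@v \<and> v \<in> kstar L"
  then obtain u v us where "u \<in> L" "x#w = u@v" "v = concat us" "set us \<subseteq> L" unfolding kstar_def by blast
  then have "x#w = concat (u#us)" "set (u#us) \<subseteq> L" by auto
  then show "x#w \<in> kstar L" unfolding kstar_def by blast
qed

lemma kstar_L4: "x#w \<in> kstar L4 \<longleftrightarrow>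
   (\<exists>a. x = (1,a) \<and> w \<in> kstar L4) \<or>
   (\<exists>a w'. x = (0,a) \<and> w = (0,a)#w' \<and> w' \<in> kstar L4) \<or>
   (\<exists>a b w'. x = (1,a) \<and> w = (0,b)#(0,a)#w' \<and> w' \<in> kstar L4) \<or>
   (\<exists>a b w'. x = (0,a) \<and> w = (2,b)#(0,a)#w' \<and> w' \<in> kstar L4)"
proof -
  have "[] \<notin> L4" unfolding L4_def by auto
  show ?thesis unfolding kstar_Cons[OF \<open>[] \<notin> L4\<close>]
  proof
    assume "\<exists>u v. u \<in> L4 \<and> x # w = u @ v \<and> v \<in> kstar L4"
    then show "(\<exists>a. x = (1,a) \<and> w \<in> kstar L4) \<or>
   (\<exists>a w'. x = (0,a) \<and> w = (0,a)#w' \<and> w' \<in> kstar L4) \<or>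
   (\<exists>a b w'. x = (1,a) \<and> w = (0,b)#(0,a)#w' \<and> w' \<in> kstar L4) \<or>
   (\<exists>a b w'. x = (0,a) \<and> w = (2,b)#(0,a)#w' \<and> w' \<in> kstar L4)" unfolding L4_def by auto
  next
    assume "(\<exists>a. x = (1,a) \<and> w \<in> kstar L4) \<or>
   (\<exists>a w'. x = (0,a) \<and> w = (0,a)#w' \<and> w' \<in> kstar L4) \<or>
   (\<exists>a b w'. x = (1,a) \<and> w = (0,b)#(0,a)#w' \<and> w' \<in> kstar L4) \<or>
   (\<exists>a b w'. x = (0,a) \<and> w = (2,b)#(0,a)#w' \<and> w' \<in> kstar L4)"
    then show "\<exists>u v. u \<in> L4 \<and> x # w = u @ v \<and> v \<in> kstar L4"
    proof (elim disjE exE conjE)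
      fix a assume "x = (1,a)" "w \<in> kstar L4"
      then show ?thesis by (intro exI[of _ "[(1,a)]"] exI[of _ w]) (auto simp: L4_def)
    next
      fix a w' assume "x = (0,a)" "w = (0,a)#w'" "w' \<in> kstar L4"
      then show ?thesis by (intro exI[of _ "[(0,a),(0,a)]"] exI[of _ w']) (auto simp: L4_def)
    next
      fix a b w' assume "x = (1,a)" "w = (0,b)#(0,a)#w'" "w' \<in> kstar L4"
      then show ?thesis by (intro exI[of _ "[(1,a),(0,b),(0,a)]"] exI[of _ w']) (auto simp: L4_def)
    next
      fix a b w' assume "x = (0,a)" "w = (2,b)#(0,a)#w'" "w' \<in> kstar L4"
      then show ?thesis by (intro exI[of _ "[(0,a),(2,b),(0,a)]"] exI[of _ w']) (auto simp: L4_def)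
    qed
  qed
qed

lemma rev_mem: "w \<in> rev ` L \<longleftrightarrow> rev w \<in> L"
proof
  assume "w \<in> rev ` L" then obtain v where "v \<in> L" "w = rev v" by blast
  then show "rev w \<in> L" by simp
next
  assume "rev w \<in> L" then have "rev (rev w) \<in> rev ` L" by blast
  then show "w \<in> rev ` L" by simp
qed

definition h6 :: "nat \<times> 'd \<Rightarrow> (nat \<times> 'd) list" where "h6 = (\<lambda>(a,d). [(0,d)])"
definition h7 :: "nat \<times> 'd \<Rightarrow> (nat \<times> 'd) list" where "h7 = (\<lambda>(a,d). [(0,d),(0,d)])"

lemma hom6: "hom_ext h6 w = map (\<lambda>(a,d). (0,d)) w"
  by (induction w) (auto simp: hom_ext_def h6_def)

lemma conc_L3: "w \<in> conc L3 K \<longleftrightarrow> w \<in> K \<or> (\<exists>d w'. w = (0,d)#w' \<and> w' \<in> K)"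
proof
  assume "w \<in> conc L3 K"
  then show "w \<in> K \<or> (\<exists>d w'. w = (0,d)#w' \<and> w' \<in> K)" unfolding conc_def L3_def by auto
next
  assume "w \<in> K \<or> (\<exists>d w'. w = (0,d)#w' \<and> w' \<in> K)"
  then show "w \<in> conc L3 K"
  proof (elim disjE exE conjE)
    assume "w \<in> K" then show ?thesis unfolding conc_def L3_def by force
  next
    fix d w' assume "w = (0,d)#w'" "w' \<in> K"
    then show ?thesis unfolding conc_def L3_def
      by (intro CollectI exI[of _ "[(0,d)]"] exI[of _ w']) auto
  qed
qed

context
  fixes y x z f :: 'd
  assumes dist: "y \<noteq> x" "y \<noteq> z" "y \<noteq> f" "x \<noteq> z" "x \<noteq> f" "z \<noteq> f"
begin

lemma union_not: "\<not> dsafa_lang {0} (L1 \<union> (L2 :: (nat \<times> 'd) list set))"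
proof
  assume "dsafa_lang {0} (L1 \<union> (L2 :: (nat \<times> 'd) list set))"
  then show False
    by (rule not_dsafa[where u="[(0,y)]" and a=0 and b=0 and a'=0 and a''=0 and x=x and y=y and z=z and f=f])
      (use dist in \<open>simp_all add: L1_def L2_def\<close>)
qed


lemma conc_not: "\<not> dsafa_lang {0} (conc L3 (L1 :: (nat \<times> 'd) list set))"
proof
  assume "dsafa_lang {0} (conc L3 (L1 :: (nat \<times> 'd) list set))"
  then show False
    by (rule not_dsafa[where u="[(0,y)]" and a=0 and b=0 and a'=0 and a''=0 and x=x and y=y and z=z and f=f])
      (use dist in \<open>simp_all add: conc_L3 L1_def\<close>)
qed

lemma kstar_not: "\<not> dsafa_lang {0,1,2} (kstar (L4 :: (nat \<times> 'd) list set))"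
proof
  assume "dsafa_lang {0,1,2} (kstar (L4 :: (nat \<times> 'd) list set))"
  then show False
    by (rule not_dsafa[where u="[(1,y)]" and a=0 and b=2 and a'=0 and a''=0 and x=x and y=y and z=z and f=f])
      (use dist in \<open>simp_all add: kstar_L4\<close>)
qed

lemma rev_not: "\<not> dsafa_lang {0} (rev ` (L5 :: (nat \<times> 'd) list set))"
proof
  assume "dsafa_lang {0} (rev ` (L5 :: (nat \<times> 'd) list set))"
  then show False
    by (rule not_dsafa[where u="[(0,y)]" and a=0 and b=0 and a'=0 and a''=0 and x=x and y=y and z=z and f=f])
      (use dist in \<open>simp_all add: rev_mem L5_def\<close>)
qed

lemma hom_not: "\<not> dsafa_lang {0,1} (hom_ext h6 ` (L6 :: (nat \<times> 'd) list set))"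
proof
  assume a: "dsafa_lang {0,1} (hom_ext h6 ` (L6 :: (nat \<times> 'd) list set))"
  have p1: "[(0,y),(0,x),(0,x)] \<in> hom_ext h6 ` (L6 :: (nat \<times> 'd) list set)"
    by (rule image_eqI[where x="[(0,y),(1,x),(0,x)]"]) (auto simp: hom6 L6_def)
  have p2: "[(0,y),(0,x),(0,y)] \<in> hom_ext h6 ` (L6 :: (nat \<times> 'd) list set)"
    by (rule image_eqI[where x="[(1,y),(0,x),(0,y)]"]) (auto simp: hom6 L6_def)
  have p3: "[(0,y),(0,x),(0,z),(0,x)] \<in> hom_ext h6 ` (L6 :: (nat \<times> 'd) list set)"
    by (rule image_eqI[where x="[(0,y),(1,x),(0,z),(0,x)]"]) (auto simp: hom6 L6_def)
  have n: "map (\<lambda>(a,d). (0::nat,d)) v \<noteq> w" if "v \<in> L6" "w \<in> {[(0,y),(0,x),(0,f)], [(0,y),(0,x),(0,z),(0,y)],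
     [(0,y),(0,x),(0,z),(0,f)]}" for v w
    using that dist unfolding L6_def by auto
  have n1: "[(0,y),(0,x),(0,f)] \<notin> hom_ext h6 ` (L6 :: (nat \<times> 'd) list set)"
  proof
    assume "[(0,y),(0,x),(0,f)] \<in> hom_ext h6 ` (L6 :: (nat \<times> 'd) list set)"
    then obtain v where "[(0,y),(0,x),(0,f)] = hom_ext h6 v" "v \<in> L6" by (rule imageE)
    then show False using n[of v "[(0,y),(0,x),(0,f)]"] unfolding hom6 by simp
  qed
  have n2: "[(0,y),(0,x),(0,z),(0,y)] \<notin> hom_ext h6 ` (L6 :: (nat \<times> 'd) list set)"
  proof
    assume "[(0,y),(0,x),(0,z),(0,y)] \<in> hom_ext h6 ` (L6 :: (nat \<times> 'd) list set)"
    then obtain v where "[(0,y),(0,x),(0,z),(0,y)] = hom_ext h6 v" "v \<in> L6" by (rule imageE)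
    then show False using n[of v "[(0,y),(0,x),(0,z),(0,y)]"] unfolding hom6 by simp
  qed
  have n3: "[(0,y),(0,x),(0,z),(0,f)] \<notin> hom_ext h6 ` (L6 :: (nat \<times> 'd) list set)"
  proof
    assume "[(0,y),(0,x),(0,z),(0,f)] \<in> hom_ext h6 ` (L6 :: (nat \<times> 'd) list set)"
    then obtain v where "[(0,y),(0,x),(0,z),(0,f)] = hom_ext h6 v" "v \<in> L6" by (rule imageE)
    then show False using n[of v "[(0,y),(0,x),(0,z),(0,f)]"] unfolding hom6 by simp
  qed
  from a show False
    by (rule not_dsafa[where u="[(0,y)]" and a=0 and b=0 and a'=0 and a''=0 and x=x and y=y and z=z and f=f])
      (use dist p1 p2 p3 n1 n2 n3 in simp_all)
qed

lemma invhom_not: "\<not> dsafa_lang {0} {w \<in> words {0}. hom_ext h7 w \<in> (L7 :: (nat \<times> 'd) list set)}"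
proof
  assume "dsafa_lang {0} {w \<in> words {0}. hom_ext h7 w \<in> (L7 :: (nat \<times> 'd) list set)}"
  then show False
    by (rule not_dsafa[where u="[(0,y)]" and a=0 and b=0 and a'=0 and a''=0 and x=x and y=y and z=z and f=f])
      (use dist in \<open>simp_all add: hom_ext_def h7_def L7_def words_def\<close>)
qed

end

theorem theorem12:
  assumes "infinite (UNIV :: 'd::countable set)"
  shows "(\<forall>\<Sigma> (L :: (nat \<times> 'd) list set). finite \<Sigma> \<and> dsafa_lang \<Sigma> L \<longrightarrow> dsafa_lang \<Sigma> (words \<Sigma> - L))
   \<and> (\<exists>\<Sigma> (L1 :: (nat \<times> 'd) list set) L2. finite \<Sigma> \<and> dsafa_lang \<Sigma> L1 \<and> dsafa_lang \<Sigma> L2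
        \<and> \<not> dsafa_lang \<Sigma> (L1 \<union> L2))
   \<and> (\<exists>\<Sigma> (L1 :: (nat \<times> 'd) list set) L2. finite \<Sigma> \<and> dsafa_lang \<Sigma> L1 \<and> dsafa_lang \<Sigma> L2
        \<and> \<not> dsafa_lang \<Sigma> (L1 \<inter> L2))
   \<and> (\<exists>\<Sigma> (L1 :: (nat \<times> 'd) list set) L2. finite \<Sigma> \<and> dsafa_lang \<Sigma> L1 \<and> dsafa_lang \<Sigma> L2
        \<and> \<not> dsafa_lang \<Sigma> (conc L1 L2))
   \<and> (\<exists>\<Sigma> (L :: (nat \<times> 'd) list set). finite \<Sigma> \<and> dsafa_lang \<Sigma> L \<and> \<not> dsafa_lang \<Sigma> (kstar L))
   \<and> (\<exists>\<Sigma> (L :: (nat \<times> 'd) list set). finite \<Sigma> \<and> dsafa_lang \<Sigma> L \<and> \<not> dsafa_lang \<Sigma> (rev ` L))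
   \<and> (\<exists>\<Sigma> (L :: (nat \<times> 'd) list set) h. finite \<Sigma> \<and> dsafa_lang \<Sigma> L \<and> is_hom \<Sigma> h
        \<and> \<not> dsafa_lang \<Sigma> (hom_ext h ` L))
   \<and> (\<exists>\<Sigma> (L :: (nat \<times> 'd) list set) h. finite \<Sigma> \<and> dsafa_lang \<Sigma> L \<and> is_hom \<Sigma> h
        \<and> \<not> dsafa_lang \<Sigma> {w \<in> words \<Sigma>. hom_ext h w \<in> L})"
  proof -
  have fin_new: "\<exists>a::'d. a \<notin> A" if "finite A" for A
    using ex_new_if_finite[OF assms that] .
  obtain y :: 'd where True by blast
  obtain x :: 'd where "x \<noteq> y" using fin_new[of "{y}"] by blast
  obtain z :: 'd where "z \<notin> {x,y}" using fin_new[of "{x,y}"] by blast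
  obtain f :: 'd where "f \<notin> {x,y,z}" using fin_new[of "{x,y,z}"] by blast
  have dist: "y \<noteq> x" "y \<noteq> z" "y \<noteq> f" "x \<noteq> z" "x \<noteq> f" "z \<noteq> f"
    using \<open>x \<noteq> y\<close> \<open>z \<notin> {x,y}\<close> \<open>f \<notin> {x,y,z}\<close> by auto
  have P1: "\<forall>\<Sigma> (L :: (nat \<times> 'd) list set). finite \<Sigma> \<and> dsafa_lang \<Sigma> L \<longrightarrow> dsafa_lang \<Sigma> (words \<Sigma> - L)"
    using dsafa_compl by blast
  have P2: "\<exists>\<Sigma> (L1 :: (nat \<times> 'd) list set) L2. finite \<Sigma> \<and> dsafa_lang \<Sigma> L1 \<and> dsafa_lang \<Sigma> L2
        \<and> \<not> dsafa_lang \<Sigma> (L1 \<union> L2)"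
    apply (rule exI[of _ "{0}"], rule exI[of _ "L1 :: (nat \<times> 'd) list set"], rule exI[of _ "L2 :: (nat \<times> 'd) list set"], intro conjI)
    apply simp
    apply (rule dsafa_L1)
    apply (rule dsafa_L2)
    apply (rule union_not[OF dist])
    done
  have I: "\<not> dsafa_lang {0} ((words {0} - L1) \<inter> (words {0} - (L2 :: (nat \<times> 'd) list set)))"
  proof
    assume "dsafa_lang {0} ((words {0} - L1) \<inter> (words {0} - (L2 :: (nat \<times> 'd) list set)))"
    then have "dsafa_lang {0} (words {0} - ((words {0} - L1) \<inter> (words {0} - (L2 :: (nat \<times> 'd) list set))))"
      by (rule dsafa_compl)
    moreover have "words {0} - ((words {0} - L1) \<inter> (words {0} - (L2 :: (nat \<times> 'd) list set))) = L1 \<union> L2"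
      using dsafa_words[OF dsafa_L1] dsafa_words[OF dsafa_L2] by blast
    ultimately show False using union_not[OF dist] by simp
  qed
  have P3: "\<exists>\<Sigma> (L1 :: (nat \<times> 'd) list set) L2. finite \<Sigma> \<and> dsafa_lang \<Sigma> L1 \<and> dsafa_lang \<Sigma> L2
        \<and> \<not> dsafa_lang \<Sigma> (L1 \<inter> L2)"
    apply (rule exI[of _ "{0}"], rule exI[of _ "words {0} - L1 :: (nat \<times> 'd) list set"], rule exI[of _ "words {0} - L2 :: (nat \<times> 'd) list set"], intro conjI)
    apply simp
    apply (rule dsafa_compl[OF dsafa_L1])
    apply (rule dsafa_compl[OF dsafa_L2])
    apply (rule I)
    done
  have P4: "\<exists>\<Sigma> (L1 :: (nat \<times> 'd) list set) L2. finite \<Sigma> \<and> dsafa_lang \<Sigma> L1 \<and> dsafa_lang \<Sigma> L2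
        \<and> \<not> dsafa_lang \<Sigma> (conc L1 L2)"
    apply (rule exI[of _ "{0}"], rule exI[of _ "L3 :: (nat \<times> 'd) list set"], rule exI[of _ "L1 :: (nat \<times> 'd) list set"], intro conjI)
    apply simp
    apply (rule dsafa_L3)
    apply (rule dsafa_L1)
    apply (rule conc_not[OF dist])
    done
  have P5: "\<exists>\<Sigma> (L :: (nat \<times> 'd) list set). finite \<Sigma> \<and> dsafa_lang \<Sigma> L \<and> \<not> dsafa_lang \<Sigma> (kstar L)"
    apply (rule exI[of _ "{0,1,2}"], rule exI[of _ "L4 :: (nat \<times> 'd) list set"], intro conjI)
    apply simp
    apply (rule dsafa_L4)
    apply (rule kstar_not[OF dist])
    done
  have P6: "\<exists>\<Sigma> (L :: (nat \<times> 'd) list set). finite \<Sigma> \<and> dsafa_lang \<Sigma> L \<and> \<not> dsafa_lang \<Sigma> (rev ` L)"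
    apply (rule exI[of _ "{0}"], rule exI[of _ "L5 :: (nat \<times> 'd) list set"], intro conjI)
    apply simp
    apply (rule dsafa_L5)
    apply (rule rev_not[OF dist])
    done
  have P7: "\<exists>\<Sigma> (L :: (nat \<times> 'd) list set) h. finite \<Sigma> \<and> dsafa_lang \<Sigma> L \<and> is_hom \<Sigma> h
        \<and> \<not> dsafa_lang \<Sigma> (hom_ext h ` L)"
    apply (rule exI[of _ "{0,1}"], rule exI[of _ "L6 :: (nat \<times> 'd) list set"], rule exI[of _ "h6 :: nat \<times> 'd \<Rightarrow> _"], intro conjI)
    apply simp
    apply (rule dsafa_L6)
    apply (simp add: is_hom_def h6_def words_def)
    apply (rule hom_not[OF dist])
    done
  have P8: "\<exists>\<Sigma> (L :: (nat \<times> 'd) list set) h. finite \<Sigma> \<and> dsafa_lang \<Sigma> L \<and> is_hom \<Sigma> h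
        \<and> \<not> dsafa_lang \<Sigma> {w \<in> words \<Sigma>. hom_ext h w \<in> L}"
    apply (rule exI[of _ "{0}"], rule exI[of _ "L7 :: (nat \<times> 'd) list set"], rule exI[of _ "h7 :: nat \<times> 'd \<Rightarrow> _"], intro conjI)
    apply simp
    apply (rule dsafa_L7)
    apply (simp add: is_hom_def h7_def words_def)
    apply (rule invhom_not[OF dist])
    done
  show ?thesis using P1 P2 P3 P4 P5 P6 P7 P8 by blast
qed

end
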